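(* Let $K$ be a characteristic kernel on $\mathcal S=\{1,\ldots,M\}$ ($M\ge2$), let $\pi_1,\dots,\pi_M\in(0,1)$ with $\sum_i\pi_i=1$, and let $P_1,\ldots,P_M$ be probability measures on a measurable space $\mathcal{Z}$. Then the KMD $\eta=\eta(P_1,\ldots,P_M)$ satisfies: (i) $\eta\in[0,1]$; (ii) $\eta=0$ if and only if $P_1=\cdots=P_M$; (iii) $\eta=1$ if and only if $P_1,\ldots,P_M$ are mutually singular, i.e. there exist pairwise disjoint measurable sets $A_1,\ldots,A_M$ with $P_i(A_i)=1$ for $i=1,\ldots,M$.
   Context: A kernel on $\mathcal S=\{1,\ldots,M\}$ is a symmetric function $K:\mathcal S\times\mathcal S\to\mathbb R$ such that the matrix $[K(i,j)]_{i,j=1}^M$ is positive semidefinite; it is characteristic if $\sum_{i,j=1}^M\alpha_i\alpha_jK(i,j)>0$ for every nonzero $(\alpha_1,\ldots,\alpha_M)\in\mathbb R^M$ with $\sum_i\alpha_i=0$. Given $P_1,\dots,P_M$ and $\pi$, let $(\tilde Z,\tilde\Delta)$ be a random pair with $\mathbb P(\tilde\Delta=i)=\pi_i$ and conditional law of $\tilde Z$ given $\tilde\Delta=i$ equal to $P_i$; let $(\tilde Z_1,\tilde\Delta_1),(\tilde Z_2,\tilde\Delta_2)$ be i.i.d. copies of $(\tilde Z,\tilde\Delta)$; and let $\tilde\Delta'$ be a random variable such that $(\tilde Z,\tilde\Delta')$ has the same law as $(\tilde Z,\tilde\Delta)$ and $\tilde\Delta,\tilde\Delta'$ are conditionally independent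 given $\tilde Z$. The kernel measure of multi-sample dissimilarity (KMD) is $$\eta(P_1,\ldots,P_M)=\frac{\mathbb E[K(\tilde\Delta,\tilde\Delta')]-\mathbb E[K(\tilde\Delta_1,\tilde\Delta_2)]}{\mathbb E[K(\tilde\Delta,\tilde\Delta)]-\mathbb E[K(\tilde\Delta_1,\tilde\Delta_2)]}.$$ *)

theory Defs
  imports "HOL-Probability.Probability"
begin

definition is_kernel :: "nat \<Rightarrow> (nat \<Rightarrow> nat \<Rightarrow> real) \<Rightarrow> bool" where
  "is_kernel M K \<longleftrightarrow>
     (\<forall>i\<in>{1..M}. \<forall>j\<in>{1..M}. K i j = K j i) \<and>
     (\<forall>\<alpha> :: nat \<Rightarrow> real. (\<Sum>i=1..M. \<Sum>j=1..M. \<alpha> i * \<alpha> j * K i j) \<ge> 0)"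

definition characteristic_kernel :: "nat \<Rightarrow> (nat \<Rightarrow> nat \<Rightarrow> real) \<Rightarrow> bool" where
  "characteristic_kernel M K \<longleftrightarrow> is_kernel M K \<and>
     (\<forall>\<alpha> :: nat \<Rightarrow> real. (\<exists>i\<in>{1..M}. \<alpha> i \<noteq> 0) \<and> (\<Sum>i=1..M. \<alpha> i) = 0 \<longrightarrow>
        (\<Sum>i=1..M. \<Sum>j=1..M. \<alpha> i * \<alpha> j * K i j) > 0)"

text \<open>Law of \<open>Z~\<close>: the mixture \<open>\<Sum>i \<pi>_i P_i\<close> on the measurable space Z.\<close>

definition mixture :: "nat \<Rightarrow> (nat \<Rightarrow> real) \<Rightarrow> (nat \<Rightarrow> 'a measure) \<Rightarrow> 'a measure \<Rightarrow> 'a measure" where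
  "mixture M \<pi> P Z = measure_of (space Z) (sets Z)
      (\<lambda>A. \<Sum>i=1..M. ennreal (\<pi> i) * emeasure (P i) A)"

text \<open>Conditional probability \<open>P(\<Delta>~ = i | Z~ = z) = \<pi>_i dP_i/d\<mu> (z)\<close>, \<open>\<mu>\<close> the law of \<open>Z~\<close>.\<close>

definition cond_label_prob :: "nat \<Rightarrow> (nat \<Rightarrow> real) \<Rightarrow> (nat \<Rightarrow> 'a measure) \<Rightarrow> 'a measure \<Rightarrow> nat \<Rightarrow> 'a \<Rightarrow> real" where
  "cond_label_prob M \<pi> P Z i z = \<pi> i * enn2real (RN_deriv (mixture M \<pi> P Z) (P i) z)"

text \<open>E[K(\<Delta>~,\<Delta>~')] with \<Delta>~,\<Delta>~' conditionally independent given Z~.\<close>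

definition E_K_cond :: "(nat \<Rightarrow> nat \<Rightarrow> real) \<Rightarrow> nat \<Rightarrow> (nat \<Rightarrow> real) \<Rightarrow> (nat \<Rightarrow> 'a measure) \<Rightarrow> 'a measure \<Rightarrow> real" where
  "E_K_cond K M \<pi> P Z = (\<integral>z. (\<Sum>i=1..M. \<Sum>j=1..M.
       K i j * cond_label_prob M \<pi> P Z i z * cond_label_prob M \<pi> P Z j z) \<partial>(mixture M \<pi> P Z))"

text \<open>E[K(\<Delta>~_1,\<Delta>~_2)] for independent copies.\<close>
definition E_K_indep :: "(nat \<Rightarrow> nat \<Rightarrow> real) \<Rightarrow> nat \<Rightarrow> (nat \<Rightarrow> real) \<Rightarrow> real" where
  "E_K_indep K M \<pi> = (\<Sum>i=1..M. \<Sum>j=1..M. \<pi> i * \<pi> j * K i j)"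

definition E_K_diag :: "(nat \<Rightarrow> nat \<Rightarrow> real) \<Rightarrow> nat \<Rightarrow> (nat \<Rightarrow> real) \<Rightarrow> real" where
  "E_K_diag K M \<pi> = (\<Sum>i=1..M. \<pi> i * K i i)"

definition KMD :: "(nat \<Rightarrow> nat \<Rightarrow> real) \<Rightarrow> nat \<Rightarrow> (nat \<Rightarrow> real) \<Rightarrow> (nat \<Rightarrow> 'a measure) \<Rightarrow> 'a measure \<Rightarrow> real" where
  "KMD K M \<pi> P Z = (E_K_cond K M \<pi> P Z - E_K_indep K M \<pi>) / (E_K_diag K M \<pi> - E_K_indep K M \<pi>)"

end

theory Submission
  imports Defs
begin

definition Qf :: "nat \<Rightarrow> (nat \<Rightarrow> nat \<Rightarrow> real) \<Rightarrow> (nat \<Rightarrow> real) \<Rightarrow> real" where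
  "Qf M K a = (\<Sum>i=1..M. \<Sum>j=1..M. a i * a j * K i j)"

lemma Qf_diff: "Qf M K (\<lambda>i. a i - b i) =
   Qf M K a - (\<Sum>i=1..M. \<Sum>j=1..M. a i * b j * K i j) - (\<Sum>i=1..M. \<Sum>j=1..M. b i * a j * K i j) + Qf M K b"
proof -
  have "Qf M K (\<lambda>i. a i - b i) = (\<Sum>i=1..M. \<Sum>j=1..M. a i * a j * K i j - a i * b j * K i j - b i * a j * K i j + b i * b j * K i j)"
    unfolding Qf_def by (intro sum.cong refl) (simp add: algebra_simps)
  also have "\<dots> = Qf M K a - (\<Sum>i=1..M. \<Sum>j=1..M. a i * b j * K i j) - (\<Sum>i=1..M. \<Sum>j=1..M. b i * a j * K i j) + Qf M K b"
    unfolding Qf_def by (simp add: sum.distrib sum_subtractf)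
  finally show ?thesis .
qed

lemma Qf_vertex:
  assumes k: "k \<in> {1..M}"
  shows "Qf M K (\<lambda>i. (if i = k then 1 else 0) - a i) =
     K k k - (\<Sum>j=1..M. a j * K k j) - (\<Sum>i=1..M. a i * K i k) + Qf M K a"
proof -
  let ?e = "\<lambda>i::nat. if i = k then 1 else (0::real)"
  have d1: "(\<Sum>j=1..M. ?e j * g j) = g k" for g :: "nat \<Rightarrow> real"
  proof -
    have "(\<Sum>j=1..M. ?e j * g j) = (\<Sum>j=1..M. if j = k then g j else 0)"
      by (intro sum.cong refl) simp
    also have "\<dots> = g k" using k by (simp add: sum.delta')
    finally show ?thesis .
  qed
  have h1: "Qf M K ?e = K k k"
  proof -
    have "Qf M K ?e = (\<Sum>i=1..M. ?e i * (\<Sum>j=1..M. ?e j * K i j))"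
      unfolding Qf_def by (intro sum.cong refl) (simp add: sum_distrib_left mult.assoc)
    also have "\<dots> = K k k" by (simp only: d1)
    finally show ?thesis .
  qed
  have h2: "(\<Sum>i=1..M. \<Sum>j=1..M. ?e i * a j * K i j) = (\<Sum>j=1..M. a j * K k j)"
  proof -
    have "(\<Sum>i=1..M. \<Sum>j=1..M. ?e i * a j * K i j) = (\<Sum>i=1..M. ?e i * (\<Sum>j=1..M. a j * K i j))"
      by (intro sum.cong refl) (simp add: sum_distrib_left mult.assoc)
    also have "\<dots> = (\<Sum>j=1..M. a j * K k j)" by (simp only: d1)
    finally show ?thesis .
  qed
  have h3: "(\<Sum>i=1..M. \<Sum>j=1..M. a i * ?e j * K i j) = (\<Sum>i=1..M. a i * K i k)"
  proof -
    have "(\<Sum>i=1..M. \<Sum>j=1..M. a i * ?e j * K i j) = (\<Sum>j=1..M. \<Sum>i=1..M. a i * ?e j * K i j)"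
      by (rule sum.swap)
    also have "\<dots> = (\<Sum>j=1..M. ?e j * (\<Sum>i=1..M. a i * K i j))"
      by (intro sum.cong refl) (simp add: sum_distrib_left algebra_simps)
    also have "\<dots> = (\<Sum>i=1..M. a i * K i k)" by (simp only: d1)
    finally show ?thesis .
  qed
  show ?thesis unfolding Qf_diff h1 h2 h3 by simp
qed

lemma Qf_vertex_sum:
  assumes s: "(\<Sum>i=1..M. a i) = 1"
  shows "(\<Sum>k=1..M. a k * Qf M K (\<lambda>i. (if i = k then 1 else 0) - a i)) = (\<Sum>k=1..M. a k * K k k) - Qf M K a"
proof -
  have "(\<Sum>k=1..M. a k * Qf M K (\<lambda>i. (if i = k then 1 else 0) - a i)) =
     (\<Sum>k=1..M. a k * K k k - (\<Sum>j=1..M. a k * a j * K k j) - (\<Sum>i=1..M. a i * a k * K i k) + a k * Qf M K a)"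
    by (intro sum.cong refl) (simp add: Qf_vertex algebra_simps sum_distrib_left)
  also have "\<dots> = (\<Sum>k=1..M. a k * K k k) - Qf M K a - (\<Sum>k=1..M. \<Sum>i=1..M. a i * a k * K i k) + (\<Sum>k=1..M. a k) * Qf M K a"
    unfolding Qf_def by (simp add: sum.distrib sum_subtractf sum_distrib_right)
  also have "(\<Sum>k=1..M. \<Sum>i=1..M. a i * a k * K i k) = Qf M K a"
    unfolding Qf_def by (rule sum.swap[symmetric])
  also have "(\<Sum>k=1..M. a k * K k k) - Qf M K a - Qf M K a + (\<Sum>k=1..M. a k) * Qf M K a = (\<Sum>k=1..M. a k * K k k) - Qf M K a" using s by simp
  finally show ?thesis .
qed


locale kmd =
  fixes K :: "nat \<Rightarrow> nat \<Rightarrow> real" and M :: nat and \<pi> :: "nat \<Rightarrow> real"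
    and P :: "nat \<Rightarrow> 'a measure" and Z :: "'a measure"
  assumes M2: "M \<ge> 2"
    and char: "characteristic_kernel M K"
    and pi: "\<forall>i\<in>{1..M}. 0 < \<pi> i \<and> \<pi> i < 1"
    and pisum: "(\<Sum>i=1..M. \<pi> i) = 1"
    and PZ: "\<forall>i\<in>{1..M}. prob_space (P i) \<and> sets (P i) = sets Z"
begin

definition mu where "mu = mixture M \<pi> P Z"

lemma pi_pos: "i \<in> {1..M} \<Longrightarrow> 0 < \<pi> i" using pi by auto
lemma pi_lt1: "i \<in> {1..M} \<Longrightarrow> \<pi> i < 1" using pi by auto
lemma P_prob: "i \<in> {1..M} \<Longrightarrow> prob_space (P i)" using PZ by auto
lemma P_sets: "i \<in> {1..M} \<Longrightarrow> sets (P i) = sets Z" using PZ by auto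
lemma P_space: "i \<in> {1..M} \<Longrightarrow> space (P i) = space Z"
  using P_sets sets_eq_imp_space_eq by blast

lemma sets_mu[simp, measurable_cong]: "sets mu = sets Z"
  unfolding mu_def mixture_def by (simp add: sets.space_closed)
lemma space_mu[simp]: "space mu = space Z"
  unfolding mu_def mixture_def by (simp add: sets.space_closed)

lemma emeasure_mu: assumes A: "A \<in> sets Z"
  shows "emeasure mu A = (\<Sum>i=1..M. ennreal (\<pi> i) * emeasure (P i) A)"
  unfolding mu_def mixture_def
proof (rule emeasure_measure_of_sigma[OF sets.sigma_algebra_axioms _ _ A])
  show "positive (sets Z) (\<lambda>A. \<Sum>i = 1..M. ennreal (\<pi> i) * emeasure (P i) A)"
    unfolding positive_def by simp
  show "countably_additive (sets Z) (\<lambda>A. \<Sum>i = 1..M. ennreal (\<pi> i) * emeasure (P i) A)"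
    unfolding countably_additive_def
  proof (intro allI impI)
    fix F :: "nat \<Rightarrow> 'a set"
    assume F1: "range F \<subseteq> sets Z" and F2: "disjoint_family F" and F3: "\<Union> (range F) \<in> sets Z"
    have "(\<Sum>n. \<Sum>i = 1..M. ennreal (\<pi> i) * emeasure (P i) (F n))
        = (\<Sum>i = 1..M. \<Sum>n. ennreal (\<pi> i) * emeasure (P i) (F n))"
      by (rule suminf_sum) (rule summableI)
    also have "\<dots> = (\<Sum>i = 1..M. ennreal (\<pi> i) * emeasure (P i) (\<Union> (range F)))"
    proof (rule sum.cong[OF refl])
      fix i assume i: "i \<in> {1..M}"
      have "(\<Sum>n. emeasure (P i) (F n)) = emeasure (P i) (\<Union> (range F))"
        using F1 F2 P_sets[OF i] by (intro suminf_emeasure) auto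
      then show "(\<Sum>n. ennreal (\<pi> i) * emeasure (P i) (F n)) = ennreal (\<pi> i) * emeasure (P i) (\<Union> (range F))"
        by simp
    qed
    finally show "(\<Sum>n. \<Sum>i = 1..M. ennreal (\<pi> i) * emeasure (P i) (F n))
        = (\<Sum>i = 1..M. ennreal (\<pi> i) * emeasure (P i) (\<Union> (range F)))" .
  qed
qed

lemma mu_prob: "prob_space mu"
proof
  have "emeasure mu (space mu) = (\<Sum>i=1..M. ennreal (\<pi> i) * emeasure (P i) (space Z))"
    by (simp add: emeasure_mu)
  also have "\<dots> = (\<Sum>i=1..M. ennreal (\<pi> i))"
    by (intro sum.cong refl) (metis P_prob P_space mult.right_neutral prob_space.emeasure_space_1)
  also have "\<dots> = 1" using pisum pi_pos by (subst sum_ennreal) (auto intro: less_imp_le)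
  finally show "emeasure mu (space mu) = 1" .
qed

sublocale mu: prob_space mu by (rule mu_prob)

lemma measure_mu_space[simp]: "measure mu (space Z) = 1"
  using mu.prob_space by simp

lemma ac: assumes i: "i \<in> {1..M}" shows "absolutely_continuous mu (P i)"
  unfolding absolutely_continuous_def
proof
  fix A assume A: "A \<in> null_sets mu"
  then have As: "A \<in> sets Z" by auto
  have "emeasure mu A = 0" using A by (rule null_setsD1)
  then have "(\<Sum>j=1..M. ennreal (\<pi> j) * emeasure (P j) A) = 0"
    using emeasure_mu[OF As] by simp
  then have "\<forall>j\<in>{1..M}. ennreal (\<pi> j) * emeasure (P j) A = 0"
    by (simp only: sum_eq_0_iff[OF finite_atLeastAtMost])
  then have "ennreal (\<pi> i) * emeasure (P i) A = 0" using i by blast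
  then have "emeasure (P i) A = 0" using pi_pos[OF i] by (simp add: ennreal_eq_0_iff)
  then show "A \<in> null_sets (P i)" using As P_sets[OF i] by auto
qed

definition p where "p i = RN_deriv mu (P i)"

lemma p_meas[measurable]: "p i \<in> borel_measurable mu"
  unfolding p_def by simp

lemma density_p: "i \<in> {1..M} \<Longrightarrow> density mu (p i) = P i"
  unfolding p_def by (rule mu.density_RN_deriv[OF ac]) (simp_all add: P_sets)

lemma AE_sum_p: "AE z in mu. (\<Sum>i=1..M. ennreal (\<pi> i) * p i z) = 1"
proof (rule mu.density_unique_finite_measure)
  show "(\<lambda>z. \<Sum>i = 1..M. ennreal (\<pi> i) * p i z) \<in> borel_measurable mu" by measurable
  show "(\<lambda>z. 1::ennreal) \<in> borel_measurable mu" by simp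
  show "AE x in mu. 0 \<le> (\<Sum>i = 1..M. ennreal (\<pi> i) * p i x)" by simp
  show "AE x in mu. 0 \<le> (1::ennreal)" by simp
  fix A assume A0: "A \<in> sets mu"
  then have A[measurable]: "A \<in> sets Z" by simp
  have "(\<integral>\<^sup>+ x. (\<Sum>i = 1..M. ennreal (\<pi> i) * p i x) * indicator A x \<partial>mu)
      = (\<integral>\<^sup>+ x. (\<Sum>i = 1..M. ennreal (\<pi> i) * (p i x * indicator A x)) \<partial>mu)"
    by (simp add: sum_distrib_right mult.assoc)
  also have "\<dots> = (\<Sum>i = 1..M. \<integral>\<^sup>+ x. ennreal (\<pi> i) * (p i x * indicator A x) \<partial>mu)"
    using A by (intro nn_integral_sum) measurable
  also have "\<dots> = (\<Sum>i = 1..M. ennreal (\<pi> i) * \<integral>\<^sup>+ x. p i x * indicator A x \<partial>mu)"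
    using A by (intro sum.cong refl nn_integral_cmult) measurable
  also have "\<dots> = (\<Sum>i = 1..M. ennreal (\<pi> i) * emeasure (P i) A)"
  proof (intro sum.cong refl)
    fix i assume i: "i \<in> {1..M}"
    have "emeasure (P i) A = emeasure (density mu (p i)) A" using density_p[OF i] by simp
    also have "\<dots> = (\<integral>\<^sup>+ x. p i x * indicator A x \<partial>mu)" using A by (simp add: emeasure_density)
    finally show "ennreal (\<pi> i) * (\<integral>\<^sup>+ x. p i x * indicator A x \<partial>mu) = ennreal (\<pi> i) * emeasure (P i) A"
      by simp
  qed
  also have "\<dots> = emeasure mu A" using A by (simp add: emeasure_mu)
  also have "\<dots> = (\<integral>\<^sup>+ x. 1 * indicator A x \<partial>mu)" using A by simp
  finally show "(\<integral>\<^sup>+ x. (\<Sum>i = 1..M. ennreal (\<pi> i) * p i x) * indicator A x \<partial>mu)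
      = (\<integral>\<^sup>+ x. 1 * indicator A x \<partial>mu)" .
qed

definition f where "f i z = enn2real (p i z)"
definition q where "q i z = \<pi> i * f i z"

lemma q_eq: "cond_label_prob M \<pi> P Z = q"
  by (intro ext) (simp add: cond_label_prob_def q_def f_def p_def mu_def)

lemma f_meas[measurable]: "f i \<in> borel_measurable mu"
  unfolding f_def by measurable
lemma q_meas[measurable]: "q i \<in> borel_measurable mu"
  unfolding q_def by measurable

lemma q_nonneg: "i \<in> {1..M} \<Longrightarrow> 0 \<le> q i z"
  unfolding q_def f_def using pi_pos[of i] by (auto intro!: mult_nonneg_nonneg less_imp_le)

definition good where
  "good z \<longleftrightarrow> (\<forall>i\<in>{1..M}. p i z = ennreal (f i z)) \<and> (\<Sum>i=1..M. q i z) = 1"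

lemma AE_good: "AE z in mu. good z"
  using AE_sum_p
proof eventually_elim
  case (elim z)
  have fin: "p i z = ennreal (f i z)" if i: "i \<in> {1..M}" for i
  proof -
    have "ennreal (\<pi> i) * p i z \<le> 1"
      using elim member_le_sum[of i "{1..M}" "\<lambda>i. ennreal (\<pi> i) * p i z"] i by simp
    then have "p i z \<noteq> \<infinity>" using pi_pos[OF i] by (auto simp: ennreal_mult_eq_top_iff top_unique)
    then show ?thesis unfolding f_def by (simp add: less_top)
  qed
  have "ennreal (\<Sum>i=1..M. q i z) = (\<Sum>i=1..M. ennreal (q i z))"
    using q_nonneg by (subst sum_ennreal) auto
  also have "\<dots> = (\<Sum>i=1..M. ennreal (\<pi> i) * p i z)"
  proof (intro sum.cong refl)
    fix i assume i: "i \<in> {1..M}"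
    have "ennreal (q i z) = ennreal (\<pi> i) * ennreal (f i z)"
      unfolding q_def using pi_pos[OF i] by (intro ennreal_mult) (auto simp: f_def)
    then show "ennreal (q i z) = ennreal (\<pi> i) * p i z" using fin[OF i] by simp
  qed
  also have "\<dots> = 1" by fact
  finally have "(\<Sum>i=1..M. q i z) = 1"
    using q_nonneg by (subst (asm) ennreal_eq_1) (auto intro: sum_nonneg)
  then show ?case using fin unfolding good_def by auto
qed

lemma good_le1: "good z \<Longrightarrow> i \<in> {1..M} \<Longrightarrow> q i z \<le> 1"
  unfolding good_def using member_le_sum[of i "{1..M}" "\<lambda>i. q i z"] q_nonneg by auto

lemma q_integrable: "i \<in> {1..M} \<Longrightarrow> integrable mu (q i)"
  by (rule mu.integrable_const_bound[where B=1])
     (use AE_good in \<open>eventually_elim\<close>, auto simp: good_le1 q_nonneg)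

lemma qq_integrable: "i \<in> {1..M} \<Longrightarrow> j \<in> {1..M} \<Longrightarrow> integrable mu (\<lambda>z. q i z * q j z)"
  by (rule mu.integrable_const_bound[where B=1])
     (use AE_good in \<open>eventually_elim\<close>, auto simp: good_le1 q_nonneg abs_mult intro: mult_le_one)

lemma integral_q: assumes i: "i \<in> {1..M}" shows "(\<integral>z. q i z \<partial>mu) = \<pi> i"
proof -
  have "ennreal (\<integral>z. q i z \<partial>mu) = (\<integral>\<^sup>+z. ennreal (q i z) \<partial>mu)"
    using q_integrable[OF i] q_nonneg[OF i] by (intro nn_integral_eq_integral[symmetric]) auto
  also have "\<dots> = (\<integral>\<^sup>+z. ennreal (\<pi> i) * p i z \<partial>mu)"
    using AE_good
  proof (intro nn_integral_cong_AE, use AE_good in eventually_elim)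
    case (elim z)
    have "ennreal (q i z) = ennreal (\<pi> i) * ennreal (f i z)"
      unfolding q_def using pi_pos[OF i] by (intro ennreal_mult) (auto simp: f_def)
    then show ?case using elim i unfolding good_def by simp
  qed
  also have "\<dots> = ennreal (\<pi> i) * (\<integral>\<^sup>+z. p i z \<partial>mu)"
    by (rule nn_integral_cmult) simp
  also have "(\<integral>\<^sup>+z. p i z \<partial>mu) = emeasure (density mu (p i)) (space mu)"
    by (subst emeasure_density) (auto intro!: nn_integral_cong simp: indicator_def)
  also have "\<dots> = 1"
  proof -
    have "emeasure (P i) (space (P i)) = 1" by (rule prob_space.emeasure_space_1[OF P_prob[OF i]])
    then show ?thesis using density_p[OF i] P_space[OF i] by simp
  qed
  finally have e: "ennreal (\<integral>z. q i z \<partial>mu) = ennreal (\<pi> i)" by simp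
  have "0 \<le> (\<integral>z. q i z \<partial>mu)" using q_nonneg[OF i] by (simp add: Bochner_Integration.integral_nonneg)
  then show ?thesis using e pi_pos[OF i] by (subst (asm) ennreal_inj) auto
qed

lemma Qf_nonneg: "0 \<le> Qf M K a"
  using char unfolding characteristic_kernel_def is_kernel_def Qf_def by blast

lemma Qf_pos: "(\<exists>i\<in>{1..M}. a i \<noteq> 0) \<Longrightarrow> (\<Sum>i=1..M. a i) = 0 \<Longrightarrow> 0 < Qf M K a"
  using char unfolding characteristic_kernel_def Qf_def by blast

lemma Qf_eq0: "(\<Sum>i=1..M. a i) = 0 \<Longrightarrow> Qf M K a = 0 \<Longrightarrow> i \<in> {1..M} \<Longrightarrow> a i = 0"
  using Qf_pos[of a] by force

lemma Qf_zero: "(\<forall>i\<in>{1..M}. a i = 0) \<Longrightarrow> Qf M K a = 0"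
  unfolding Qf_def by simp

lemma Ec_eq: "E_K_cond K M \<pi> P Z = (\<integral>z. (\<Sum>i=1..M. \<Sum>j=1..M. K i j * q i z * q j z) \<partial>mu)"
  unfolding E_K_cond_def q_eq mu_def[symmetric] ..

lemma Eind_eq: "E_K_indep K M \<pi> = Qf M K \<pi>"
  unfolding E_K_indep_def Qf_def ..

lemma Qf_q_meas[measurable]: "(\<lambda>z. Qf M K (\<lambda>i. g i z)) \<in> borel_measurable mu"
  if [measurable]: "\<And>i. g i \<in> borel_measurable mu" for g
  unfolding Qf_def by measurable

lemma int_sum2:
  assumes "\<And>i j. i \<in> {1..M} \<Longrightarrow> j \<in> {1..M} \<Longrightarrow> integrable mu (\<lambda>z. g i j z)"
  shows "(\<integral>z. (\<Sum>i=1..M. \<Sum>j=1..M. g i j z) \<partial>mu) = (\<Sum>i=1..M. \<Sum>j=1..M. (\<integral>z. g i j z \<partial>mu))"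
proof -
  have "(\<integral>z. (\<Sum>i=1..M. \<Sum>j=1..M. g i j z) \<partial>mu) = (\<Sum>i=1..M. (\<integral>z. (\<Sum>j=1..M. g i j z) \<partial>mu))"
    by (rule Bochner_Integration.integral_sum) (use assms in auto)
  also have "\<dots> = (\<Sum>i=1..M. \<Sum>j=1..M. (\<integral>z. g i j z \<partial>mu))"
    by (intro sum.cong refl, rule Bochner_Integration.integral_sum) (use assms in auto)
  finally show ?thesis .
qed

lemma Ec_sum: "E_K_cond K M \<pi> P Z = (\<Sum>i=1..M. \<Sum>j=1..M. K i j * (\<integral>z. q i z * q j z \<partial>mu))"
proof -
  have "E_K_cond K M \<pi> P Z = (\<Sum>i=1..M. \<Sum>j=1..M. \<integral>z. K i j * (q i z * q j z) \<partial>mu)"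
    unfolding Ec_eq mult.assoc
    by (rule int_sum2) (auto intro!: integrable_mult_right qq_integrable)
  also have "\<dots> = (\<Sum>i=1..M. \<Sum>j=1..M. K i j * (\<integral>z. q i z * q j z \<partial>mu))"
    by simp
  finally show ?thesis .
qed

lemma term_int:
  assumes i: "i \<in> {1..M}" and j: "j \<in> {1..M}"
  defines "t \<equiv> \<lambda>z. q i z * q j z * K i j - q i z * \<pi> j * K i j - \<pi> i * q j z * K i j + \<pi> i * \<pi> j * K i j"
  shows "integrable mu t" "(\<integral>z. t z \<partial>mu) = K i j * (\<integral>z. q i z * q j z \<partial>mu) - \<pi> i * \<pi> j * K i j"
proof -
  note I = qq_integrable[OF i j] q_integrable[OF i] q_integrable[OF j]
  show "integrable mu t" unfolding t_def using I by auto
  have "(\<integral>z. t z \<partial>mu) = (\<integral>z. q i z * q j z \<partial>mu) * K i j - (\<integral>z. q i z \<partial>mu) * \<pi> j * K i j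
      - \<pi> i * (\<integral>z. q j z \<partial>mu) * K i j + \<pi> i * \<pi> j * K i j"
    unfolding t_def using I by (simp add: mu.prob_space)
  also have "\<dots> = K i j * (\<integral>z. q i z * q j z \<partial>mu) - \<pi> i * \<pi> j * K i j"
    using integral_q[OF i] integral_q[OF j] by (simp add: algebra_simps)
  finally show "(\<integral>z. t z \<partial>mu) = K i j * (\<integral>z. q i z * q j z \<partial>mu) - \<pi> i * \<pi> j * K i j" .
qed

lemma Qf_q_expand: "Qf M K (\<lambda>i. q i z - \<pi> i) = (\<Sum>i=1..M. \<Sum>j=1..M.
   q i z * q j z * K i j - q i z * \<pi> j * K i j - \<pi> i * q j z * K i j + \<pi> i * \<pi> j * K i j)"
  unfolding Qf_def by (intro sum.cong refl) (simp add: algebra_simps)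

lemma N_integrable: "integrable mu (\<lambda>z. Qf M K (\<lambda>i. q i z - \<pi> i))"
  unfolding Qf_q_expand by (intro Bochner_Integration.integrable_sum) (auto intro: term_int)

lemma N_eq: "E_K_cond K M \<pi> P Z - E_K_indep K M \<pi> = (\<integral>z. Qf M K (\<lambda>i. q i z - \<pi> i) \<partial>mu)"
proof -
  have "(\<integral>z. Qf M K (\<lambda>i. q i z - \<pi> i) \<partial>mu) = (\<Sum>i=1..M. \<Sum>j=1..M. K i j * (\<integral>z. q i z * q j z \<partial>mu) - \<pi> i * \<pi> j * K i j)"
    unfolding Qf_q_expand
    by (subst int_sum2) (auto intro!: sum.cong term_int)
  also have "\<dots> = E_K_cond K M \<pi> P Z - E_K_indep K M \<pi>"
    unfolding Ec_sum Eind_eq Qf_def by (simp add: sum_subtractf)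
  finally show ?thesis ..
qed

abbreviation e :: "nat \<Rightarrow> nat \<Rightarrow> real" where "e k i \<equiv> (if i = k then 1 else 0)"

lemma sum_e: "k \<in> {1..M} \<Longrightarrow> (\<Sum>i=1..M. e k i) = 1"
  by (simp add: sum.delta')

lemma sum_e_diff: "k \<in> {1..M} \<Longrightarrow> (\<Sum>i=1..M. a i) = 1 \<Longrightarrow> (\<Sum>i=1..M. e k i - a i) = 0"
  by (simp add: sum_subtractf sum_e)

lemma D_eq: "E_K_diag K M \<pi> - E_K_indep K M \<pi> = (\<Sum>k=1..M. \<pi> k * Qf M K (\<lambda>i. e k i - \<pi> i))"
  unfolding E_K_diag_def Eind_eq Qf_vertex_sum[OF pisum] ..

lemma D_pos: "0 < E_K_diag K M \<pi> - E_K_indep K M \<pi>"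
proof -
  have one: "1 \<in> {1..M}" using M2 by auto
  have "0 < Qf M K (\<lambda>i. e 1 i - \<pi> i)"
  proof (rule Qf_pos)
    show "\<exists>i\<in>{1..M}. e 1 i - \<pi> i \<noteq> 0" using one pi_lt1[OF one] by (intro bexI[of _ 1]) auto
    show "(\<Sum>i=1..M. e 1 i - \<pi> i) = 0" by (rule sum_e_diff[OF one pisum])
  qed
  then have "0 < \<pi> 1 * Qf M K (\<lambda>i. e 1 i - \<pi> i)" using pi_pos[OF one] by simp
  also have "\<dots> \<le> (\<Sum>k=1..M. \<pi> k * Qf M K (\<lambda>i. e k i - \<pi> i))"
  proof (rule member_le_sum[OF one])
    fix x assume "x \<in> {1..M} - {1}"
    then have "0 < \<pi> x" using pi_pos by auto
    then show "0 \<le> \<pi> x * Qf M K (\<lambda>i. e x i - \<pi> i)" using Qf_nonneg by simp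
  qed simp
  finally show ?thesis unfolding D_eq .
qed

definition h where "h z = (\<Sum>k=1..M. q k z * Qf M K (\<lambda>i. e k i - q i z))"

lemma h_meas[measurable]: "h \<in> borel_measurable mu"
  unfolding h_def Qf_def by measurable

lemma h_nonneg: "0 \<le> h z"
  unfolding h_def by (intro sum_nonneg mult_nonneg_nonneg q_nonneg Qf_nonneg) auto

lemma AE_h: "AE z in mu. h z = (\<Sum>k=1..M. q k z * K k k) - Qf M K (\<lambda>i. q i z)"
  using AE_good
proof eventually_elim
  case (elim z)
  then have "(\<Sum>i=1..M. q i z) = 1" unfolding good_def by simp
  then show ?case unfolding h_def by (rule Qf_vertex_sum)
qed

lemma Qq_integrable: "integrable mu (\<lambda>z. Qf M K (\<lambda>i. q i z))"
  unfolding Qf_def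
  by (intro Bochner_Integration.integrable_sum) (auto intro!: integrable_mult_left qq_integrable)

lemma Ec_Qf: "E_K_cond K M \<pi> P Z = (\<integral>z. Qf M K (\<lambda>i. q i z) \<partial>mu)"
  unfolding Ec_eq Qf_def by (intro Bochner_Integration.integral_cong refl sum.cong) (simp add: ac_simps)

lemma Ediag_int: "(\<integral>z. (\<Sum>k=1..M. q k z * K k k) \<partial>mu) = E_K_diag K M \<pi>"
proof -
  have "(\<integral>z. (\<Sum>k=1..M. q k z * K k k) \<partial>mu) = (\<Sum>k=1..M. (\<integral>z. q k z * K k k \<partial>mu))"
    by (rule Bochner_Integration.integral_sum) (auto intro!: integrable_mult_left q_integrable)
  also have "\<dots> = (\<Sum>k=1..M. \<pi> k * K k k)"
    by (intro sum.cong refl) (simp add: integral_q)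
  finally show ?thesis unfolding E_K_diag_def .
qed

lemma hrhs_meas: "(\<lambda>z. (\<Sum>k=1..M. q k z * K k k) - Qf M K (\<lambda>i. q i z)) \<in> borel_measurable mu"
  unfolding Qf_def by measurable

lemma h_integrable: "integrable mu h"
proof -
  have "integrable mu (\<lambda>z. (\<Sum>k=1..M. q k z * K k k) - Qf M K (\<lambda>i. q i z))"
    by (intro Bochner_Integration.integrable_diff Bochner_Integration.integrable_sum Qq_integrable)
       (auto intro!: integrable_mult_left q_integrable)
  then show ?thesis
    using integrable_cong_AE[OF h_meas hrhs_meas AE_h] by simp
qed

lemma DN_eq: "E_K_diag K M \<pi> - E_K_cond K M \<pi> P Z = (\<integral>z. h z \<partial>mu)"
proof -
  have "(\<integral>z. h z \<partial>mu) = (\<integral>z. (\<Sum>k=1..M. q k z * K k k) - Qf M K (\<lambda>i. q i z) \<partial>mu)"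
    by (rule integral_cong_AE[OF h_meas hrhs_meas AE_h])
  also have "\<dots> = (\<integral>z. (\<Sum>k=1..M. q k z * K k k) \<partial>mu) - (\<integral>z. Qf M K (\<lambda>i. q i z) \<partial>mu)"
    by (rule Bochner_Integration.integral_diff)
       (auto intro!: Bochner_Integration.integrable_sum integrable_mult_left q_integrable Qq_integrable)
  finally show ?thesis unfolding Ediag_int Ec_Qf by simp
qed

lemma N_nonneg: "0 \<le> E_K_cond K M \<pi> P Z - E_K_indep K M \<pi>"
  unfolding N_eq by (simp add: Bochner_Integration.integral_nonneg Qf_nonneg)

lemma DN_nonneg: "0 \<le> E_K_diag K M \<pi> - E_K_cond K M \<pi> P Z"
  unfolding DN_eq by (simp add: Bochner_Integration.integral_nonneg h_nonneg)

lemma N_zero_iff: "E_K_cond K M \<pi> P Z - E_K_indep K M \<pi> = 0 \<longleftrightarrow> (AE z in mu. \<forall>i\<in>{1..M}. q i z = \<pi> i)"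
proof -
  have "E_K_cond K M \<pi> P Z - E_K_indep K M \<pi> = 0 \<longleftrightarrow> (AE z in mu. Qf M K (\<lambda>i. q i z - \<pi> i) = 0)"
    unfolding N_eq by (rule integral_nonneg_eq_0_iff_AE[OF N_integrable]) (simp add: Qf_nonneg)
  also have "\<dots> \<longleftrightarrow> (AE z in mu. \<forall>i\<in>{1..M}. q i z = \<pi> i)"
  proof
    assume "AE z in mu. Qf M K (\<lambda>i. q i z - \<pi> i) = 0"
    then show "AE z in mu. \<forall>i\<in>{1..M}. q i z = \<pi> i"
      using AE_good
    proof eventually_elim
      case (elim z)
      have "(\<Sum>i=1..M. q i z - \<pi> i) = 0" using elim pisum unfolding good_def by (simp add: sum_subtractf)
      then show ?case using Qf_eq0[of "\<lambda>i. q i z - \<pi> i"] elim by auto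
    qed
  next
    assume "AE z in mu. \<forall>i\<in>{1..M}. q i z = \<pi> i"
    then show "AE z in mu. Qf M K (\<lambda>i. q i z - \<pi> i) = 0"
      by eventually_elim (rule Qf_zero, auto)
  qed
  finally show ?thesis .
qed

lemma vertex_iff:
  assumes nn: "\<forall>i\<in>{1..M}. 0 \<le> a i" and s: "(\<Sum>i=1..M. a i) = 1"
  shows "(\<Sum>k=1..M. a k * Qf M K (\<lambda>i. e k i - a i)) = 0 \<longleftrightarrow> (\<exists>k\<in>{1..M}. \<forall>i\<in>{1..M}. a i = e k i)"
proof
  assume z: "(\<Sum>k=1..M. a k * Qf M K (\<lambda>i. e k i - a i)) = 0"
  have all0: "\<forall>k\<in>{1..M}. a k * Qf M K (\<lambda>i. e k i - a i) = 0"
    using z nn by (subst (asm) sum_nonneg_eq_0_iff) (auto intro!: mult_nonneg_nonneg Qf_nonneg)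
  obtain k where k: "k \<in> {1..M}" "a k \<noteq> 0"
    using s by (metis (no_types, lifting) sum.neutral zero_neq_one)
  then have "Qf M K (\<lambda>i. e k i - a i) = 0" using all0 by auto
  then have "\<forall>i\<in>{1..M}. e k i - a i = 0"
    using Qf_eq0[OF sum_e_diff[OF k(1) s]] by blast
  then show "\<exists>k\<in>{1..M}. \<forall>i\<in>{1..M}. a i = e k i" using k(1) by (intro bexI[of _ k]) auto
next
  assume "\<exists>k\<in>{1..M}. \<forall>i\<in>{1..M}. a i = e k i"
  then obtain k where k: "k \<in> {1..M}" "\<forall>i\<in>{1..M}. a i = e k i" by blast
  show "(\<Sum>k=1..M. a k * Qf M K (\<lambda>i. e k i - a i)) = 0"
  proof (rule sum.neutral, intro ballI)
    fix k' assume k': "k' \<in> {1..M}"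
    show "a k' * Qf M K (\<lambda>i. e k' i - a i) = 0"
    proof (cases "k' = k")
      case True
      then have "Qf M K (\<lambda>i. e k' i - a i) = 0" using k by (intro Qf_zero) auto
      then show ?thesis by simp
    next
      case False
      then show ?thesis using k k' by auto
    qed
  qed
qed

lemma AE_good_iff:
  assumes "\<And>z. good z \<Longrightarrow> A z \<longleftrightarrow> B z"
  shows "(AE z in mu. A z) \<longleftrightarrow> (AE z in mu. B z)"
proof
  assume "AE z in mu. A z" then show "AE z in mu. B z"
    using AE_good by eventually_elim (use assms in blast)
next
  assume "AE z in mu. B z" then show "AE z in mu. A z"
    using AE_good by eventually_elim (use assms in blast)
qed

definition V where "V z \<longleftrightarrow> (\<exists>k\<in>{1..M}. \<forall>i\<in>{1..M}. q i z = e k i)"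

lemma DN_zero_iff: "E_K_diag K M \<pi> - E_K_cond K M \<pi> P Z = 0 \<longleftrightarrow> (AE z in mu. V z)"
proof -
  have "E_K_diag K M \<pi> - E_K_cond K M \<pi> P Z = 0 \<longleftrightarrow> (AE z in mu. h z = 0)"
    unfolding DN_eq by (rule integral_nonneg_eq_0_iff_AE[OF h_integrable]) (simp add: h_nonneg)
  also have "\<dots> \<longleftrightarrow> (AE z in mu. V z)"
  proof (rule AE_good_iff)
    fix z assume g: "good z"
    have "(\<Sum>i=1..M. q i z) = 1" using g unfolding good_def by simp
    then show "h z = 0 \<longleftrightarrow> V z" unfolding h_def V_def
      by (rule vertex_iff[rotated]) (auto intro: q_nonneg)
  qed
  finally show ?thesis .
qed

lemma P_emeasure_eq: "i \<in> {1..M} \<Longrightarrow> emeasure (P i) A = ennreal (measure (P i) A)"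
  using P_prob[THEN prob_space.finite_measure] finite_measure.emeasure_eq_measure by metis

lemma f_zero_of_q: "i \<in> {1..M} \<Longrightarrow> good z \<Longrightarrow> q i z = 0 \<Longrightarrow> p i z = 0"
  using pi_pos[of i] unfolding good_def q_def by auto

lemma Z1: "(AE z in mu. \<forall>i\<in>{1..M}. q i z = \<pi> i) \<longleftrightarrow> (\<forall>i\<in>{1..M}. \<forall>j\<in>{1..M}. P i = P j)"
proof
  assume H: "AE z in mu. \<forall>i\<in>{1..M}. q i z = \<pi> i"
  have Pmu: "P i = mu" if i: "i \<in> {1..M}" for i
  proof -
    have "AE z in mu. p i z = 1"
      using H AE_good
    proof eventually_elim
      case (elim z)
      then have "\<pi> i * f i z = \<pi> i" "p i z = ennreal (f i z)" using i unfolding q_def good_def by auto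
      then show ?case using pi_pos[OF i] by simp
    qed
    then have "density mu (p i) = density mu (\<lambda>_. 1)" by (intro density_cong) auto
    then show ?thesis using density_p[OF i] density_1 by simp
  qed
  then show "\<forall>i\<in>{1..M}. \<forall>j\<in>{1..M}. P i = P j" by simp
next
  assume H: "\<forall>i\<in>{1..M}. \<forall>j\<in>{1..M}. P i = P j"
  have one: "1 \<in> {1..M}" using M2 by auto
  have mu1: "mu = P 1"
  proof (rule measure_eqI)
    show "sets mu = sets (P 1)" using P_sets[OF one] by simp
    fix A assume "A \<in> sets mu"
    then have A: "A \<in> sets Z" by simp
    have "emeasure mu A = (\<Sum>i=1..M. ennreal (\<pi> i) * emeasure (P 1) A)"
      unfolding emeasure_mu[OF A]
    proof (intro sum.cong refl)
      fix i assume i: "i \<in> {1..M}"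
      have "P i = P 1" using H i one by blast
      then show "ennreal (\<pi> i) * emeasure (P i) A = ennreal (\<pi> i) * emeasure (P 1) A" by simp
    qed
    also have "\<dots> = (\<Sum>i=1..M. ennreal (\<pi> i)) * emeasure (P 1) A" by (simp add: sum_distrib_right)
    also have "(\<Sum>i=1..M. ennreal (\<pi> i)) = 1"
      using pisum pi_pos by (subst sum_ennreal) (auto intro: less_imp_le)
    finally show "emeasure mu A = emeasure (P 1) A" by simp
  qed
  have "AE z in mu. p i z = 1" if i: "i \<in> {1..M}" for i
  proof (rule mu.density_unique)
    show "density mu (p i) = density mu (\<lambda>_. 1)"
    proof -
      have "P i = P 1" using H i one by blast
      then show ?thesis using density_p[OF i] density_1[of mu] mu1 by simp
    qed
  qed auto
  then have "AE z in mu. \<forall>i\<in>{1..M}. p i z = 1" by (intro AE_finite_allI) auto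
  then show "AE z in mu. \<forall>i\<in>{1..M}. q i z = \<pi> i"
    by eventually_elim (simp add: q_def f_def)
qed

definition Aset where "Aset i = {z \<in> space Z. q i z = 1 \<and> (\<forall>j\<in>{1..M}. j \<noteq> i \<longrightarrow> q j z = 0)}"

lemma Aset_sets: "Aset i \<in> sets Z"
proof -
  have "Aset i = {z \<in> space mu. q i z = 1 \<and> (\<forall>j\<in>{1..M}. j \<noteq> i \<longrightarrow> q j z = 0)}"
    unfolding Aset_def by simp
  also have "\<dots> \<in> sets mu" by measurable
  finally show ?thesis by simp
qed

lemma Z2a:
  assumes H: "AE z in mu. V z"
  shows "\<exists>A :: nat \<Rightarrow> 'a set. (\<forall>i\<in>{1..M}. A i \<in> sets Z \<and> measure (P i) (A i) = 1)
                                  \<and> disjoint_family_on A {1..M}"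
proof (intro exI[of _ Aset] conjI ballI)
  show "disjoint_family_on Aset {1..M}"
    unfolding disjoint_family_on_def Aset_def by auto
  fix i assume i: "i \<in> {1..M}"
  show "Aset i \<in> sets Z" by (rule Aset_sets)
  have "emeasure (P i) (space Z - Aset i) = (\<integral>\<^sup>+ z. p i z * indicator (space Z - Aset i) z \<partial>mu)"
  proof -
    have c: "space Z - Aset i \<in> sets mu" using Aset_sets by auto
    show ?thesis using emeasure_density[OF p_meas c, of i] density_p[OF i] by simp
  qed
  also have "\<dots> = (\<integral>\<^sup>+ z. 0 \<partial>mu)"
  proof (rule nn_integral_cong_AE)
    show "AE z in mu. p i z * indicator (space Z - Aset i) z = 0"
      using H AE_good
    proof eventually_elim
      case (elim z)
      then obtain k where k: "k \<in> {1..M}" "\<forall>j\<in>{1..M}. q j z = e k j" unfolding V_def by blast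
      show ?case
      proof (cases "k = i")
        case True
        then have "z \<notin> space Z - Aset i" using k unfolding Aset_def by auto
        then show ?thesis by simp
      next
        case False
        then have "q i z = 0" using k i by auto
        then have "p i z = 0" using f_zero_of_q[OF i elim(2)] by simp
        then show ?thesis by simp
      qed
    qed
  qed
  finally have "emeasure (P i) (space Z - Aset i) = 0" by simp
  then have "measure (P i) (space (P i) - Aset i) = 0" using P_space[OF i] by (simp add: measure_def)
  moreover have "measure (P i) (space (P i) - Aset i) = 1 - measure (P i) (Aset i)"
    using Aset_sets P_sets[OF i] by (intro prob_space.prob_compl[OF P_prob[OF i]]) auto
  ultimately show "measure (P i) (Aset i) = 1" by simp
qed

lemma Z2b:
  assumes A: "\<forall>i\<in>{1..M}. A i \<in> sets Z \<and> measure (P i) (A i) = 1" and dj: "disjoint_family_on A {1..M}"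
  shows "AE z in mu. V z"
proof -
  have compl0: "emeasure (P j) (space Z - A j) = 0" if j: "j \<in> {1..M}" for j
  proof -
    have "measure (P j) (space (P j) - A j) = 1 - measure (P j) (A j)"
      using A j P_sets[OF j] by (intro prob_space.prob_compl[OF P_prob[OF j]]) auto
    then show ?thesis using A j P_emeasure_eq[OF j] P_space[OF j] by simp
  qed
  have off0: "emeasure (P j) (A i) = 0" if i: "i \<in> {1..M}" and j: "j \<in> {1..M}" and ij: "i \<noteq> j" for i j
  proof -
    have "A i \<subseteq> space Z - A j"
      using dj i j ij A sets.sets_into_space unfolding disjoint_family_on_def by blast
    then have "emeasure (P j) (A i) \<le> emeasure (P j) (space Z - A j)"
      using A j P_sets[OF j] by (intro emeasure_mono) auto
    then show ?thesis using compl0[OF j] by simp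
  qed
  have cov: "AE z in mu. z \<notin> space Z - (\<Union>i\<in>{1..M}. A i)"
  proof (rule AE_not_in)
    have S: "space Z - (\<Union>i\<in>{1..M}. A i) \<in> sets Z" using A by auto
    have "emeasure mu (space Z - (\<Union>i\<in>{1..M}. A i)) = (\<Sum>j=1..M. ennreal (\<pi> j) * emeasure (P j) (space Z - (\<Union>i\<in>{1..M}. A i)))"
      by (rule emeasure_mu[OF S])
    also have "\<dots> = 0"
    proof (rule sum.neutral, intro ballI)
      fix j assume j: "j \<in> {1..M}"
      have "emeasure (P j) (space Z - (\<Union>i\<in>{1..M}. A i)) \<le> emeasure (P j) (space Z - A j)"
        using A j P_sets[OF j] by (intro emeasure_mono) auto
      then show "ennreal (\<pi> j) * emeasure (P j) (space Z - (\<Union>i\<in>{1..M}. A i)) = 0"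
        using compl0[OF j] by simp
    qed
    finally show "space Z - (\<Union>i\<in>{1..M}. A i) \<in> null_sets mu" using S by auto
  qed
  have offAE: "AE z in mu. z \<in> A i \<longrightarrow> p j z = 0"
    if i: "i \<in> {1..M}" and j: "j \<in> {1..M}" and ij: "i \<noteq> j" for i j
  proof -
    have Ai[measurable]: "A i \<in> sets mu" using A i by simp
    have "(\<integral>\<^sup>+ z. p j z * indicator (A i) z \<partial>mu) = emeasure (P j) (A i)"
      using emeasure_density[OF p_meas Ai, of j] density_p[OF j] by simp
    also have "\<dots> = 0" by (rule off0[OF i j ij])
    finally have "AE z in mu. p j z * indicator (A i) z = 0"
      by (subst (asm) nn_integral_0_iff_AE) auto
    then show ?thesis by eventually_elim (auto simp: indicator_def split: if_splits)
  qed
  have "AE z in mu. \<forall>i\<in>{1..M}. \<forall>j\<in>{1..M}. i \<noteq> j \<longrightarrow> z \<in> A i \<longrightarrow> p j z = 0"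
    using offAE by (intro AE_finite_allI) auto
  then show ?thesis using AE_good cov AE_space
  proof eventually_elim
    case (elim z)
    then obtain k where k: "k \<in> {1..M}" "z \<in> A k" by auto
    have qj: "q j z = 0" if j: "j \<in> {1..M}" "j \<noteq> k" for j
    proof -
      have "p j z = 0" using elim(1) k j by auto
      then have "f j z = 0" unfolding f_def by simp
      then show ?thesis unfolding q_def by simp
    qed
    have "(\<Sum>i=1..M. q i z) = q k z + (\<Sum>i\<in>{1..M} - {k}. q i z)"
      using k by (simp add: sum.remove)
    also have "(\<Sum>i\<in>{1..M} - {k}. q i z) = 0" using qj by (intro sum.neutral) auto
    finally have "q k z = 1" using elim(2) unfolding good_def by simp
    then show "V z" unfolding V_def using k qj by (intro bexI[of _ k]) auto
  qed
qed

end

theorem theorem1: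
  fixes K :: "nat \<Rightarrow> nat \<Rightarrow> real" and M :: nat and \<pi> :: "nat \<Rightarrow> real"
    and P :: "nat \<Rightarrow> 'a measure" and Z :: "'a measure"
  assumes "M \<ge> 2"
    and "characteristic_kernel M K"
    and "\<forall>i\<in>{1..M}. 0 < \<pi> i \<and> \<pi> i < 1"
    and "(\<Sum>i=1..M. \<pi> i) = 1"
    and "\<forall>i\<in>{1..M}. prob_space (P i) \<and> sets (P i) = sets Z"
  shows "(0 \<le> KMD K M \<pi> P Z \<and> KMD K M \<pi> P Z \<le> 1)
    \<and> (KMD K M \<pi> P Z = 0 \<longleftrightarrow> (\<forall>i\<in>{1..M}. \<forall>j\<in>{1..M}. P i = P j))
    \<and> (KMD K M \<pi> P Z = 1 \<longleftrightarrow>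
           (\<exists>A :: nat \<Rightarrow> 'a set. (\<forall>i\<in>{1..M}. A i \<in> sets Z \<and> measure (P i) (A i) = 1)
                                  \<and> disjoint_family_on A {1..M}))"
proof -
  interpret kmd K M \<pi> P Z using assms by (rule kmd.intro)
  define N where "N = E_K_cond K M \<pi> P Z - E_K_indep K M \<pi>"
  define D where "D = E_K_diag K M \<pi> - E_K_indep K M \<pi>"
  have eta: "KMD K M \<pi> P Z = N / D" unfolding KMD_def N_def D_def ..
  have Dp: "0 < D" unfolding D_def by (rule D_pos)
  have Nn: "0 \<le> N" unfolding N_def by (rule N_nonneg)
  have DN: "D - N = E_K_diag K M \<pi> - E_K_cond K M \<pi> P Z" unfolding D_def N_def by simp
  have ND: "N \<le> D" using DN DN_nonneg by simp
  have i1: "0 \<le> KMD K M \<pi> P Z \<and> KMD K M \<pi> P Z \<le> 1"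
    unfolding eta using Dp Nn ND by (simp add: divide_le_eq_1)
  have "KMD K M \<pi> P Z = 0 \<longleftrightarrow> N = 0" unfolding eta using Dp by simp
  also have "\<dots> \<longleftrightarrow> (AE z in mu. \<forall>i\<in>{1..M}. q i z = \<pi> i)" unfolding N_def by (rule N_zero_iff)
  also have "\<dots> \<longleftrightarrow> (\<forall>i\<in>{1..M}. \<forall>j\<in>{1..M}. P i = P j)" by (rule Z1)
  finally have i2: "KMD K M \<pi> P Z = 0 \<longleftrightarrow> (\<forall>i\<in>{1..M}. \<forall>j\<in>{1..M}. P i = P j)" .
  have "KMD K M \<pi> P Z = 1 \<longleftrightarrow> D - N = 0" unfolding eta using Dp by simp
  also have "\<dots> \<longleftrightarrow> (AE z in mu. V z)" unfolding DN by (rule DN_zero_iff)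
  also have "\<dots> \<longleftrightarrow> (\<exists>A :: nat \<Rightarrow> 'a set. (\<forall>i\<in>{1..M}. A i \<in> sets Z \<and> measure (P i) (A i) = 1)
                                  \<and> disjoint_family_on A {1..M})"
    using Z2a Z2b by blast
  finally show ?thesis using i1 i2 by blast
qed

end
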